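(* For every $n\ge1$, \[ F^{\mathrm{(per)}}_{2n}(2)=\frac{(2n)!}{2\,n!}\cdot\frac{3\,\Gamma(\frac n2+1)}{\Gamma(\frac{3n}{2}+1)},\qquad F^{\mathrm{(per)}}_{2n}(\tfrac12)=2^{-n-1}\,\frac{(2n)!}{2\,n!}\cdot\frac{3\,\Gamma(\frac n2+1)}{\Gamma(\frac{3n}{2}+1)} . \] In particular, for $n$ odd, $F^{\mathrm{(per)}}_{2n}(2)=\dfrac{2^{2n-1}\mathrm{AV}_n^2}{\mathrm{A}_n}$ and $F^{\mathrm{(per)}}_{2n}(\tfrac12)=\dfrac{2^{n-2}\mathrm{AV}_n^2}{\mathrm{A}_n}$.
   Context: $F^{\mathrm{(per)}}_{2n}(x) = \sum_{k=1}^n \binom{n+k-2}{k-1}\frac{(2n-1)!\,(2n-k-1)! }{(3 n-2)!\,(n-k)!}x^k$ (boundary loop generating function of the periodic Temperley–Lieb loop model at loop weight 1, size $2n$). $\mathrm{A}_n=\prod_{j=0}^{n-1}\frac{(3j+1)!}{(n+j)!}$, and $\mathrm{AV}_{2m+1}=\prod_{j=0}^{m-1}(3j+2)\frac{(6j+3)!\,(2j+1)!}{(4j+3)!\,(4j+2)!}$. *)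

theory Defs
  imports "HOL-Analysis.Analysis"
begin

text \<open>Boundary loop generating function F^(per)_{2n}(x), indexed by n (size 2n).\<close>
definition F_per :: "nat \<Rightarrow> real \<Rightarrow> real" where
  "F_per n x = (\<Sum>k=1..n. real ((n + k - 2) choose (k - 1)) *
      (fact (2*n - 1) * fact (2*n - k - 1)) / (fact (3*n - 2) * fact (n - k)) * x ^ k)"

definition A_num :: "nat \<Rightarrow> real" where
  "A_num n = (\<Prod>j<n. fact (3*j + 1) / fact (n + j))"

text \<open>AV_odd m = AV_{2m+1} = prod_{j=0}^{m-1} (3j+2) (6j+3)!(2j+1)!/((4j+3)!(4j+2)!)\<close>
definition AV_odd :: "nat \<Rightarrow> real" where
  "AV_odd m = (\<Prod>j<m. real (3*j + 2) * (fact (6*j + 3) * fact (2*j + 1)) /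
                          (fact (4*j + 3) * fact (4*j + 2)))"

end

theory Submission
  imports Defs "HOL-Analysis.Analysis"
begin

definition Qp :: "real \<Rightarrow> real \<Rightarrow> real" where
 "Qp N j = (252+1190*N+2052*N^2+1652*N^3+630*N^4+92*N^5)
   - (484+1611*N+1899*N^2+948*N^3+170*N^4)*j + (309+708*N+510*N^2+116*N^3)*j^2
   - (91+129*N+43*N^2)*j^3 + (15+10*N)*j^4 - j^5"

lemma poly_a:
  fixes J M :: real
  shows "12*(3*(J+M)+2)*(3*(J+M)+4)*(J+2*M)*(M+1)*(M+2)*(J+M+1)*(J+M+2)
     - (2*J+M+2)*(2*J+M+1)*(J+2*M+4)*(J+2*M+3)*(J+2*M+2)*(J+2*M+1)*(J+2*M)
    = 2*(2*J+M+1)*(M+2)*Qp (J+M) (J+1) - J*(J+2*M)*Qp (J+M) J"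
  unfolding Qp_def by algebra

definition tz :: "nat \<Rightarrow> nat \<Rightarrow> real" where
  "tz N j = (if j \<le> N then fact (N+j) * fact (2*N-j) * 2^j / (fact j * fact N ^ 2 * fact (N-j)) else 0)"

definition gg :: "nat \<Rightarrow> nat \<Rightarrow> real" where
  "gg N j = (if j \<le> N+2 then fact (N+j) * fact (2*N-j) * 2^j / (fact j * fact (N+2-j) * fact N ^ 2)
       * real j * Qp (real N) (real j) / ((real N + 1) * (real N + 2)) else 0)"

lemma fact1: "(fact (Suc k) :: real) = (real k + 1) * fact k"
  by (simp add: fact_Suc)
lemma fact2: "(fact (k+2) :: real) = (real k + 2) * (real k + 1) * fact k"
  by (simp add: fact_Suc numeral_eq_Suc field_simps)
lemma fact4: "(fact (k+4) :: real) = (real k + 4) * (real k + 3) * (real k + 2) * (real k + 1) * fact k"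
  by (simp add: fact_Suc numeral_eq_Suc field_simps)

lemma rearr:
  fixes a b c d e f g F1 F2 F3 F4 F5 P :: real
  assumes "d \<noteq> 0" "e \<noteq> 0" "f \<noteq> 0" "g \<noteq> 0" "F3 \<noteq> 0" "F4 \<noteq> 0" "F5 \<noteq> 0"
  shows "e*d*((a*b*F1*(c*F2)*P)/(F3*(d*e*F5)^2*(f*g*F4))) = F1*F2*P/(F3*F4*F5^2) * (a*b*c/(e*d*f*g))"
  using assms by (simp add: field_simps power2_eq_square)

lemma rearr3:
  fixes a b c d e f F1 F2 F3 F4 F5 P Q :: real
  assumes "b \<noteq> 0" "c \<noteq> 0" "d \<noteq> 0" "e \<noteq> 0" "f \<noteq> 0" "F3 \<noteq> 0" "F4 \<noteq> 0" "F5 \<noteq> 0"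
  shows "a*F1*(F2/b)*(2*P)/(c*F3*(d*F4)*F5^2)*c*Q/(e*f) = F1*F2*P/(F3*F4*F5^2) * (2*a*Q/(b*d*e*f))"
  using assms by (simp add: field_simps)

lemma rearr4:
  fixes a g d e f F1 F2 F3 F4 F5 P Q :: real
  assumes "g \<noteq> 0" "d \<noteq> 0" "e \<noteq> 0" "f \<noteq> 0" "F3 \<noteq> 0" "F4 \<noteq> 0" "F5 \<noteq> 0"
  shows "F1*F2*P/(F3*(g*d*F4)*F5^2)*a*Q/(e*f) = F1*F2*P/(F3*F4*F5^2) * (a*Q/(g*d*e*f))"
  using assms by (simp add: field_simps)

lemma gen1:
  fixes c x e b :: real
  assumes "e \<noteq> 0" "b \<noteq> 0"
  shows "c - x/e = (c*(b*e) - x*b)/(b*e)"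
  using assms by (simp add: field_simps)

lemma gen3:
  fixes y p q r w b J Q0 Q1 :: real
  assumes "b \<noteq> 0" "p \<noteq> 0" "q \<noteq> 0" "r \<noteq> 0" "w \<noteq> 0"
  shows "(y*p*Q1 - J*b*Q0)/(b*(r*w*p*q)) = y*Q1/(b*q*r*w) - J*Q0/(p*q*r*w)"
  using assms by (simp add: field_simps)

lemma case_a:
  assumes "j \<le> N" "N \<ge> 2"
  shows "12*(3*real N+2)*(3*real N+4)*tz N j - (real N+1)*(real N+2)*tz (N+2) j = gg N (Suc j) - gg N j"
proof -
  define m where "m = N - j"
  define J where "J = real j"
  define M where "M = real m"
  have N: "real N = J + M" using assms unfolding J_def M_def m_def by simp
  define F1 where "F1 = (fact (N+j) :: real)"
  define F2 where "F2 = (fact (2*N-j) :: real)"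
  define F3 where "F3 = (fact j :: real)"
  define F4 where "F4 = (fact m :: real)"
  define F5 where "F5 = (fact N :: real)"
  define P where "P = (2::real)^j"
  have nz: "F1 \<noteq> 0" "F2 \<noteq> 0" "F3 \<noteq> 0" "F4 \<noteq> 0" "F5 \<noteq> 0" "P \<noteq> 0"
    unfolding F1_def F2_def F3_def F4_def F5_def P_def by auto
  have pos: "J \<ge> 0" "M \<ge> 0" "J + 2*M \<ge> 2" using assms unfolding J_def M_def m_def by auto
  have r2: "real (2*N-j) = J + 2*M" using assms unfolding J_def M_def m_def by simp
  have e1: "tz N j = F1*F2*P/(F3*F5^2*F4)"
    using assms unfolding tz_def F1_def F2_def F3_def F4_def F5_def P_def m_def by (simp add: field_simps)
  have a1: "(fact (N+2+j)::real) = (2*J+M+2)*(2*J+M+1)*F1"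
    using fact2[of "N+j"] unfolding F1_def by (simp add: N J_def add_ac)
  have a2: "(fact (2*(N+2)-j)::real) = (J+2*M+4)*(J+2*M+3)*(J+2*M+2)*(J+2*M+1)*F2"
  proof -
    have "2*(N+2)-j = (2*N-j)+4" using assms by simp
    then show ?thesis using fact4[of "2*N-j"] r2 unfolding F2_def by simp
  qed
  have a3: "(fact (N+2)::real) = (J+M+2)*(J+M+1)*F5"
    using fact2[of N] unfolding F5_def by (simp add: N)
  have a4: "(fact (N+2-j)::real) = (M+2)*(M+1)*F4"
  proof -
    have "N+2-j = m+2" using assms unfolding m_def by simp
    then show ?thesis using fact2[of m] unfolding F4_def M_def by simp
  qed
  have e2: "tz (N+2) j = (2*J+M+2)*(2*J+M+1)*F1*((J+2*M+4)*(J+2*M+3)*(J+2*M+2)*(J+2*M+1)*F2)*P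
        /(F3*((J+M+2)*(J+M+1)*F5)^2*((M+2)*(M+1)*F4))"
  proof -
    have jj: "j \<le> N+2" using assms by simp
    have "tz (N+2) j = fact (N+2+j) * fact (2*(N+2)-j) * 2^j / (fact j * fact (N+2)^2 * fact (N+2-j))"
      by (simp only: tz_def if_P[OF jj])
    then show ?thesis unfolding a1 a2 a3 a4 P_def F3_def .
  qed
  have e4: "gg N j = F1*F2*P/(F3*((M+2)*(M+1)*F4)*F5^2)*J*Qp (J+M) J/((J+M+1)*(J+M+2))"
  proof -
    have jj: "j \<le> N+2" using assms by simp
    have "gg N j = fact (N+j) * fact (2*N-j) * 2^j / (fact j * fact (N+2-j) * fact N ^ 2)
       * real j * Qp (real N) (real j) / ((real N + 1) * (real N + 2))"
      by (simp only: gg_def if_P[OF jj])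
    then show ?thesis unfolding a4 N F1_def[symmetric] F2_def[symmetric] F3_def[symmetric] F5_def[symmetric] P_def[symmetric] J_def[symmetric] .
  qed
  have b1: "(fact (N + Suc j)::real) = (2*J+M+1)*F1"
    using fact1[of "N+j"] unfolding F1_def by (simp add: N J_def)
  have b2: "(fact (2*N - Suc j)::real) = F2/(J+2*M)"
  proof -
    have "2*N-j = Suc (2*N - Suc j)" using assms by simp
    then have "F2 = (J+2*M) * fact (2*N - Suc j)" unfolding F2_def
      using fact1[of "2*N - Suc j"] r2 by (metis fact_Suc of_nat_fact)
    then show ?thesis using pos by (simp add: field_simps)
  qed
  have b3: "(fact (Suc j)::real) = (J+1)*F3"
    using fact1[of j] unfolding F3_def J_def by simp
  have b4: "(fact (N+2-Suc j)::real) = (M+1)*F4"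
  proof -
    have "N+2-Suc j = Suc m" using assms unfolding m_def by simp
    then show ?thesis using fact1[of m] unfolding F4_def M_def by simp
  qed
  have e3: "gg N (Suc j) = (2*J+M+1)*F1*(F2/(J+2*M))*(2*P)/((J+1)*F3*((M+1)*F4)*F5^2)*(J+1)*Qp (J+M) (J+1)/((J+M+1)*(J+M+2))"
  proof -
    have jj: "Suc j \<le> N+2" using assms by simp
    have "gg N (Suc j) = fact (N+Suc j) * fact (2*N-Suc j) * 2^(Suc j) / (fact (Suc j) * fact (N+2-Suc j) * fact N ^ 2)
       * real (Suc j) * Qp (real N) (real (Suc j)) / ((real N + 1) * (real N + 2))"
      by (simp only: gg_def if_P[OF jj])
    moreover have "(2::real)^(Suc j) = 2*P" unfolding P_def by simp
    moreover have "real (Suc j) = J+1" unfolding J_def by simp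
    ultimately show ?thesis unfolding b1 b2 b3 b4 N F5_def[symmetric] using pos by (simp add: field_simps)
  qed
  define K where "K = F1*F2*P/(F3*F4*F5^2)"
  have K0: "K \<noteq> 0" using nz unfolding K_def by simp
  have h: "J+2*M \<noteq> 0" "J+1 \<noteq> 0" "M+1\<noteq>0" "M+2\<noteq>0" "J+M+1\<noteq>0" "J+M+2\<noteq>0" using pos by auto
  define D where "D = (J+2*M)*(M+1)*(M+2)*(J+M+1)*(J+M+2)"
  have D0: "D \<noteq> 0" using h unfolding D_def by simp
  define X where "X = (2*J+M+2)*(2*J+M+1)*((J+2*M+4)*(J+2*M+3)*(J+2*M+2)*(J+2*M+1))"
  define E where "E = (J+M+1)*(J+M+2)*(M+2)*(M+1)"
  have E0: "E \<noteq> 0" using h unfolding E_def by simp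
  have k1: "tz N j = K" unfolding e1 K_def by (simp add: ac_simps)
  have k2: "(real N+1)*(real N+2)*tz (N+2) j = K * (X / E)"
    unfolding e2 K_def X_def E_def N using rearr nz h by simp
  have k3: "gg N (Suc j) = K * (2*(2*J+M+1)*Qp (J+M) (J+1) / ((J+2*M)*(M+1)*(J+M+1)*(J+M+2)))"
    unfolding e3 K_def using rearr3 nz h by simp
  have k4: "gg N j = K * (J*Qp (J+M) J / ((M+2)*(M+1)*(J+M+1)*(J+M+2)))"
    unfolding e4 K_def using rearr4 nz h by simp
  have pa: "12*(3*(J+M)+2)*(3*(J+M)+4) - X/E
     = 2*(2*J+M+1)*Qp (J+M) (J+1) / ((J+2*M)*(M+1)*(J+M+1)*(J+M+2)) - J*Qp (J+M) J / ((M+2)*(M+1)*(J+M+1)*(J+M+2))"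
  proof -
    have "12*(3*(J+M)+2)*(3*(J+M)+4) - X/E = (12*(3*(J+M)+2)*(3*(J+M)+4)*((J+2*M)*E) - X*(J+2*M))/((J+2*M)*E)"
      using gen1[OF E0 h(1)] .
    also have "\<dots> = (2*(2*J+M+1)*(M+2)*Qp (J+M) (J+1) - J*(J+2*M)*Qp (J+M) J) / ((J+2*M)*E)"
    proof -
      have "12*(3*(J+M)+2)*(3*(J+M)+4)*((J+2*M)*E) - X*(J+2*M) = 12*(3*(J+M)+2)*(3*(J+M)+4)*(J+2*M)*(M+1)*(M+2)*(J+M+1)*(J+M+2)
     - (2*J+M+2)*(2*J+M+1)*(J+2*M+4)*(J+2*M+3)*(J+2*M+2)*(J+2*M+1)*(J+2*M)"
        unfolding X_def E_def by algebra
      then show ?thesis unfolding poly_a by simp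
    qed
    also have "\<dots> = 2*(2*J+M+1)*Qp (J+M) (J+1) / ((J+2*M)*(M+1)*(J+M+1)*(J+M+2)) - J*Qp (J+M) J / ((M+2)*(M+1)*(J+M+1)*(J+M+2))"
      unfolding E_def using gen3 h by simp
    finally show ?thesis .
  qed
  have "12*(3*real N+2)*(3*real N+4)*tz N j - (real N+1)*(real N+2)*tz (N+2) j
      = K * (12*(3*(J+M)+2)*(3*(J+M)+4) - X/E)"
    unfolding k2 k1 by (simp add: N algebra_simps)
  also have "\<dots> = gg N (Suc j) - gg N j" unfolding pa k3 k4 by (simp add: algebra_simps)
  finally show ?thesis .
qed


lemma polyc: "Qp n (n+2) = 2*(n+2)*(2*n+3)*(n+1)*n*(n-1)" unfolding Qp_def by algebra
lemma polyb: "(n-1)*Qp n (n+1) = 4*Qp n (n+2) + 2*(2*n+3)*(n+3)*n*(n-1)*(n+1)*(n+2)" unfolding Qp_def by algebra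
lemma genc:
  fixes m n F G P Q2 :: real
  assumes "m \<ge> 1" "n = m + 1" "F \<noteq> 0" "G \<noteq> 0" "P \<noteq> 0" "Q2 = 2*(n+2)*(2*n+3)*(n+1)*n*m"
  shows "(n+1)*(n+2)*((2*n+4)*(2*n+3)*(2*n+2)*F*(4*P)/((n+2)*(n+1)*n*m*G)^2)
    = (2*n+2)*F*G*(4*P)/((n+2)*(n+1)*n*m*G*(n*m*G)^2)*(n+2)*Q2/((n+1)*(n+2))"
proof -
  have h: "m \<noteq> 0" "m+1 \<noteq> 0" "m+2 \<noteq> 0" "m+3 \<noteq> 0" using assms by auto
  show ?thesis unfolding assms(6) assms(2) using h assms(3-5) by (simp add: divide_simps power2_eq_square)
qed
lemma genb:
  fixes m n F G P Q1 Q2 :: real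
  assumes "m \<ge> 1" "n = m + 1" "F \<noteq> 0" "G \<noteq> 0" "P \<noteq> 0" "m*Q1 = 4*Q2 + 2*(2*n+3)*(n+3)*n*m*(n+1)*(n+2)"
  shows "- (n+1)*(n+2)*((2*n+3)*(2*n+2)*F*((n+3)*(n+2)*(n+1)*n*m*G)*(2*P)/((n+1)*n*m*G*((n+2)*(n+1)*n*m*G)^2))
    = (2*n+2)*F*G*(4*P)/((n+2)*(n+1)*n*m*G*(n*m*G)^2)*(n+2)*Q2/((n+1)*(n+2))
     - F*(m*G)*(2*P)/((n+1)*n*m*G*(n*m*G)^2)*(n+1)*Q1/((n+1)*(n+2))"
proof -
  have h: "m \<noteq> 0" "m+1 \<noteq> 0" "m+2 \<noteq> 0" "m+3 \<noteq> 0" using assms by auto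
  have Q1: "Q1 = (4*Q2 + 2*(2*n+3)*(n+3)*n*m*(n+1)*(n+2))/m" using assms(6) h by (simp add: field_simps)
  show ?thesis unfolding Q1 assms(2) using h assms(3-5) apply (simp add: divide_simps power2_eq_square) by algebra
qed
lemma case_bc:
  assumes "N \<ge> 2"
  shows "12*(3*real N+2)*(3*real N+4)*tz N (N+2) - (real N+1)*(real N+2)*tz (N+2) (N+2) = gg N (Suc (N+2)) - gg N (N+2)"
    "12*(3*real N+2)*(3*real N+4)*tz N (N+1) - (real N+1)*(real N+2)*tz (N+2) (N+1) = gg N (Suc (N+1)) - gg N (N+1)"
proof -
  obtain q where q: "N = Suc (Suc q)" using assms by (metis add_2_eq_Suc le_Suc_ex)
  define n where "n = real N"
  define m where "m = real N - 1"
  define F where "F = (fact (2*N+1) :: real)"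
  define G where "G = (fact (N-2) :: real)"
  define P where "P = (2::real)^N"
  have nz: "F \<noteq> 0" "G \<noteq> 0" "P \<noteq> 0" unfolding F_def G_def P_def by auto
  have mn: "m \<ge> 1" "n = m + 1" unfolding m_def n_def using assms by auto
  have f1: "(fact (2*N+4)::real) = (2*n+4)*(2*n+3)*(2*n+2)*F"
    unfolding F_def n_def by (simp add: numeral_eq_Suc fact_Suc algebra_simps)
  have f2: "(fact (2*N+2)::real) = (2*n+2)*F"
    unfolding F_def n_def by (simp add: numeral_eq_Suc fact_Suc algebra_simps)
  have f3: "(fact (2*N+3)::real) = (2*n+3)*(2*n+2)*F"
    unfolding F_def n_def by (simp add: numeral_eq_Suc fact_Suc algebra_simps)
  have g0: "(fact N::real) = n*m*G"
    unfolding G_def n_def m_def q by (simp add: fact_Suc algebra_simps)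
  have g1: "(fact (N+1)::real) = (n+1)*n*m*G"
    unfolding G_def n_def m_def q by (simp add: fact_Suc algebra_simps)
  have g2: "(fact (N+2)::real) = (n+2)*(n+1)*n*m*G"
    unfolding G_def n_def m_def q by (simp add: fact_Suc algebra_simps)
  have g3: "(fact (N+3)::real) = (n+3)*(n+2)*(n+1)*n*m*G"
    unfolding G_def n_def m_def q by (simp add: numeral_eq_Suc fact_Suc algebra_simps)
  have gm: "(fact (N-1)::real) = m*G"
    unfolding G_def n_def m_def q by (simp add: fact_Suc algebra_simps)
  have p1: "(2::real)^(N+1) = 2*P" "(2::real)^(N+2) = 4*P" unfolding P_def by simp_all
  have Q2: "Qp n (n+2) = 2*(n+2)*(2*n+3)*(n+1)*n*m" unfolding polyc mn(2) by simp
  have Q1: "m*Qp n (n+1) = 4*Qp n (n+2) + 2*(2*n+3)*(n+3)*n*m*(n+1)*(n+2)"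
    using polyb[of n] mn(2) by simp
  have T2: "tz (N+2) (N+2) = (2*n+4)*(2*n+3)*(2*n+2)*F*(4*P)/((n+2)*(n+1)*n*m*G)^2"
  proof -
    have "tz (N+2) (N+2) = fact ((N+2)+(N+2)) * fact (2*(N+2)-(N+2)) * 2^(N+2) / (fact (N+2) * fact (N+2) ^ 2 * fact ((N+2)-(N+2)))"
      unfolding tz_def by simp
    also have "(N+2)+(N+2) = 2*N+4" by simp
    also have "2*(N+2)-(N+2) = N+2" by simp
    finally show ?thesis unfolding f1 g2 p1 by (simp add: power2_eq_square mult_ac)
  qed
  have T1: "tz (N+2) (N+1) = (2*n+3)*(2*n+2)*F*((n+3)*(n+2)*(n+1)*n*m*G)*(2*P)/((n+1)*n*m*G*((n+2)*(n+1)*n*m*G)^2)"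
  proof -
    have "tz (N+2) (N+1) = fact ((N+2)+(N+1)) * fact (2*(N+2)-(N+1)) * 2^(N+1) / (fact (N+1) * fact (N+2) ^ 2 * fact ((N+2)-(N+1)))"
      unfolding tz_def by simp
    also have "(N+2)+(N+1) = 2*N+3" by simp
    also have "2*(N+2)-(N+1) = N+3" by simp
    also have "(N+2)-(N+1) = 1" by simp
    finally show ?thesis unfolding f3 g1 g2 g3 p1 by simp
  qed
  have GG2: "gg N (N+2) = (2*n+2)*F*G*(4*P)/((n+2)*(n+1)*n*m*G*(n*m*G)^2)*(n+2)*Qp n (n+2)/((n+1)*(n+2))"
  proof -
    have "gg N (N+2) = fact (N+(N+2)) * fact (2*N-(N+2)) * 2^(N+2) / (fact (N+2) * fact (N+2-(N+2)) * fact N ^ 2)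
       * real (N+2) * Qp (real N) (real (N+2)) / ((real N + 1) * (real N + 2))"
      unfolding gg_def by simp
    also have "N+(N+2) = 2*N+2" by simp
    also have "2*N-(N+2) = N-2" by simp
    finally show ?thesis unfolding f2 g2 g0 p1 G_def[symmetric] n_def by (simp add: add_ac)
  qed
  have GG1: "gg N (N+1) = F*(m*G)*(2*P)/((n+1)*n*m*G*(n*m*G)^2)*(n+1)*Qp n (n+1)/((n+1)*(n+2))"
  proof -
    have "gg N (N+1) = fact (N+(N+1)) * fact (2*N-(N+1)) * 2^(N+1) / (fact (N+1) * fact (N+2-(N+1)) * fact N ^ 2)
       * real (N+1) * Qp (real N) (real (N+1)) / ((real N + 1) * (real N + 2))"
      unfolding gg_def by simp
    also have "N+(N+1) = 2*N+1" by simp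
    also have "2*N-(N+1) = N-1" by simp
    also have "N+2-(N+1) = 1" by simp
    finally show ?thesis unfolding gm g1 g0 p1 F_def[symmetric] n_def by (simp add: add_ac)
  qed
  have z: "tz N (N+2) = 0" "tz N (N+1) = 0" "gg N (Suc (N+2)) = 0" unfolding tz_def gg_def by auto
  show "12*(3*real N+2)*(3*real N+4)*tz N (N+2) - (real N+1)*(real N+2)*tz (N+2) (N+2) = gg N (Suc (N+2)) - gg N (N+2)"
    unfolding z T2 GG2 n_def[symmetric] using genc[OF mn nz Q2] by simp
  show "12*(3*real N+2)*(3*real N+4)*tz N (N+1) - (real N+1)*(real N+2)*tz (N+2) (N+1) = gg N (Suc (N+1)) - gg N (N+1)"
  proof -
    have e: "gg N (Suc (N+1)) = gg N (N+2)" by simp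
    have "12*(3*real N+2)*(3*real N+4)*tz N (N+1) - (real N+1)*(real N+2)*tz (N+2) (N+1)
       = - ((n+1)*(n+2)*((2*n+3)*(2*n+2)*F*((n+3)*(n+2)*(n+1)*n*m*G)*(2*P)/((n+1)*n*m*G*((n+2)*(n+1)*n*m*G)^2)))"
      unfolding z T1 n_def by simp
    also have "\<dots> = - (n+1)*(n+2)*((2*n+3)*(2*n+2)*F*((n+3)*(n+2)*(n+1)*n*m*G)*(2*P)/((n+1)*n*m*G*((n+2)*(n+1)*n*m*G)^2))"
      by (simp only: mult_minus_left)
    also have "\<dots> = (2*n+2)*F*G*(4*P)/((n+2)*(n+1)*n*m*G*(n*m*G)^2)*(n+2)*Qp n (n+2)/((n+1)*(n+2))
     - F*(m*G)*(2*P)/((n+1)*n*m*G*(n*m*G)^2)*(n+1)*Qp n (n+1)/((n+1)*(n+2))"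
      by (rule genb[OF mn nz Q1])
    also have "\<dots> = gg N (Suc (N+1)) - gg N (N+1)" unfolding e GG2 GG1 ..
    finally show ?thesis .
  qed
qed



definition aa :: "nat \<Rightarrow> real" where "aa N = (\<Sum>j\<le>N. tz N j)"

lemma tele_step:
  assumes "N \<ge> 2" "j < N+3"
  shows "12*(3*real N+2)*(3*real N+4)*tz N j - (real N+1)*(real N+2)*tz (N+2) j = gg N (Suc j) - gg N j"
proof -
  consider "j \<le> N" | "j = N+1" | "j = N+2" using assms by linarith
  then show ?thesis
  proof cases
    case 1 then show ?thesis using case_a assms by blast
  next
    case 2 then show ?thesis using case_bc(2) assms by blast
  next
    case 3 then show ?thesis using case_bc(1) assms by blast
  qed
qed

lemma aa_rec_big:
  assumes "N \<ge> 2"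
  shows "(real N+1)*(real N+2)*aa (N+2) = 12*(3*real N+2)*(3*real N+4)*aa N"
proof -
  have "(\<Sum>j<N+3. 12*(3*real N+2)*(3*real N+4)*tz N j - (real N+1)*(real N+2)*tz (N+2) j)
      = (\<Sum>j<N+3. gg N (Suc j) - gg N j)"
    using tele_step[OF assms] by (intro sum.cong) auto
  also have "\<dots> = gg N (N+3) - gg N 0" by (rule sum_lessThan_telescope)
  also have "\<dots> = 0" unfolding gg_def by simp
  finally have S: "(\<Sum>j<N+3. 12*(3*real N+2)*(3*real N+4)*tz N j - (real N+1)*(real N+2)*tz (N+2) j) = 0" .
  have a0: "(\<Sum>j<N+3. tz N j) = aa N"
  proof -
    have "N+3 = Suc (Suc (Suc N))" by simp
    then have "(\<Sum>j<N+3. tz N j) = (\<Sum>j<N. tz N j) + tz N N + tz N (Suc N) + tz N (Suc (Suc N))"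
      by (simp only: sum.lessThan_Suc)
    also have "\<dots> = aa N" unfolding aa_def
      by (simp add: tz_def flip: lessThan_Suc_atMost)
    finally show ?thesis .
  qed
  have a2: "(\<Sum>j<N+3. tz (N+2) j) = aa (N+2)"
  proof -
    have "{..<N+3} = {..N+2}" by auto
    then show ?thesis unfolding aa_def by simp
  qed
  have "(\<Sum>j<N+3. 12*(3*real N+2)*(3*real N+4)*tz N j - (real N+1)*(real N+2)*tz (N+2) j)
      = 12*(3*real N+2)*(3*real N+4)*(\<Sum>j<N+3. tz N j) - (real N+1)*(real N+2)*(\<Sum>j<N+3. tz (N+2) j)"
    by (simp add: sum_subtractf sum_distrib_left)
  with S a0 a2 show ?thesis by simp
qed

lemma aa_small: "aa 0 = 1" "aa 1 = 6" "aa 2 = 48" "aa 3 = 420"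
  unfolding aa_def tz_def by (simp_all add: numeral_eq_Suc atMost_Suc fact_Suc)

lemma aa_rec:
  shows "(real N+1)*(real N+2)*aa (N+2) = 12*(3*real N+2)*(3*real N+4)*aa N"
proof (cases "N \<ge> 2")
  case True then show ?thesis by (rule aa_rec_big)
next
  case False
  then have "N = 0 \<or> N = 1" by auto
  then show ?thesis using aa_small by (auto simp: numeral_eq_Suc)
qed




definition cc :: "nat \<Rightarrow> nat \<Rightarrow> real" where
  "cc N j = fact (N+j) * fact (2*N-j) / (fact j * fact N ^ 2 * fact (N-j))"
definition PP :: "nat \<Rightarrow> real \<Rightarrow> real" where "PP N x = (\<Sum>j\<le>N. cc N j * x^j)"
definition CC :: "nat \<Rightarrow> real" where "CC N = fact (2*N+1) * fact N / fact (3*N+1)"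

lemma gen5:
  fixes a b c d e f g x :: real
  assumes "b \<noteq> 0" "c \<noteq> 0" "f \<noteq> 0" "g \<noteq> 0"
  shows "a/(b*c)*(d*e)/(f*g)*(x*x^j) = d*c/f*x*(a*e/(b*c^2*g)*x^j)"
  using assms by (simp add: field_simps power2_eq_square)

lemma aa_PP: "aa N = PP N 2"
  unfolding aa_def PP_def tz_def cc_def by (intro sum.cong) auto

lemma F_PP: "F_per (Suc N) x = CC N * x * PP N x"
proof -
  have "F_per (Suc N) x = (\<Sum>k=Suc 0..Suc N. real ((Suc N + k - 2) choose (k - 1)) *
      (fact (2*Suc N - 1) * fact (2*Suc N - k - 1)) / (fact (3*Suc N - 2) * fact (Suc N - k)) * x ^ k)"
    unfolding F_per_def by simp
  also have "\<dots> = (\<Sum>j=0..N. real ((N + j) choose j) *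
      (fact (2*N+1) * fact (2*N - j)) / (fact (3*N+1) * fact (N - j)) * x ^ Suc j)"
    unfolding sum.shift_bounds_cl_Suc_ivl by (intro sum.cong) (auto simp: numeral_eq_Suc)
  also have "\<dots> = (\<Sum>j\<le>N. CC N * x * (cc N j * x^j))"
  proof (intro sum.cong)
    fix j assume "j \<in> {..N}"
    then have jN: "j \<le> N" by simp
    have b: "real ((N + j) choose j) = fact (N+j) / (fact j * fact N)"
      using binomial_fact[of j "N+j"] by simp
    show "real ((N + j) choose j) *
      (fact (2*N+1) * fact (2*N - j)) / (fact (3*N+1) * fact (N - j)) * x ^ Suc j = CC N * x * (cc N j * x^j)"
      unfolding b CC_def cc_def power_Suc by (rule gen5) auto
  qed (auto simp: atMost_atLeast0)
  also have "\<dots> = CC N * x * PP N x" unfolding PP_def by (simp add: sum_distrib_left)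
  finally show ?thesis .
qed

lemma PP_sym: "PP N (1/2) = (1/2)^N * PP N 2"
proof -
  have "PP N (1/2) = (\<Sum>j=0..N. cc N j * (1/2)^j)" unfolding PP_def by (simp add: atMost_atLeast0)
  also have "\<dots> = (\<Sum>j=0..N. cc N (N + 0 - j) * (1/2)^(N + 0 - j))" by (rule sum.atLeastAtMost_rev)
  also have "\<dots> = (\<Sum>j=0..N. (1/2)^N * (cc N j * 2^j))"
  proof (intro sum.cong refl)
    fix j assume "j \<in> {0..N}"
    then have jN: "j \<le> N" by simp
    have e1: "N + (N - j) = 2*N - j" "2*N - (N-j) = N+j" "N - (N-j) = j" using jN by auto
    have c: "cc N (N - j) = cc N j" unfolding cc_def e1 by (simp add: mult_ac)
    have p: "(1/2::real)^(N - j) = (1/2)^N * 2^j"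
    proof -
      have "(1/2::real)^N = (1/2)^(N-j) * (1/2)^j" using jN by (metis le_add_diff_inverse2 power_add)
      then show ?thesis by (simp add: power_one_over field_simps)
    qed
    show "cc N (N + 0 - j) * (1/2)^(N + 0 - j) = (1/2)^N * (cc N j * 2^j)" using c p by simp
  qed
  also have "\<dots> = (1/2)^N * PP N 2" unfolding PP_def by (simp add: sum_distrib_left atMost_atLeast0)
  finally show ?thesis .
qed

lemma F_half: "F_per (Suc N) (1/2) = (1/2)^(Suc N + 1) * F_per (Suc N) 2"
  unfolding F_PP PP_sym by (simp add: field_simps)




lemma Gp: "(x::real) > 0 \<Longrightarrow> Gamma (x+1) = x * Gamma x"
  using Gamma_plus1[of x] nonpos_Ints_nonpos[of x] by force

definition RR :: "nat \<Rightarrow> real" where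
  "RR n = fact (2*n) / (2 * fact n) * (3 * Gamma (real n / 2 + 1) / Gamma (3 * real n / 2 + 1))"

lemma RR_rec:
  assumes "n \<ge> 1"
  shows "RR (n+2) = RR n * (16*(2*real n+3)*(2*real n+1)/(3*(3*real n+4)*(3*real n+2)))"
proof -
  define a where "a = real n / 2 + 1"
  define b where "b = 3 * real n / 2 + 1"
  have apos: "a > 0" "b > 0" unfolding a_def b_def by auto
  have ga: "Gamma (real (n+2) / 2 + 1) = a * Gamma a"
  proof -
    have "real (n+2) / 2 + 1 = a + 1" unfolding a_def by simp
    then show ?thesis using Gp[OF apos(1)] by simp
  qed
  have gb: "Gamma (3 * real (n+2) / 2 + 1) = (b+2)*(b+1)*b * Gamma b"
  proof -
    have eq: "3 * real (n+2) / 2 + 1 = ((b + 1) + 1) + 1" unfolding b_def by simp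
    have "Gamma (((b + 1) + 1) + 1) = (b+2)*(b+1)*b * Gamma b"
      using Gp[of "(b+1)+1"] Gp[of "b+1"] Gp[of b] apos by (simp add: algebra_simps)
    then show ?thesis unfolding eq .
  qed
  have f1: "(fact (2*(n+2)) :: real) = (2*real n+4)*(2*real n+3)*(2*real n+2)*(2*real n+1)*fact (2*n)"
  proof -
    have "2*(n+2) = Suc (Suc (Suc (Suc (2*n))))" by simp
    then show ?thesis by (simp add: fact_Suc algebra_simps)
  qed
  have f2: "(fact (n+2) :: real) = (real n+2)*(real n+1)*fact n"
    using fact2[of n] by simp
  have G0: "Gamma a > 0" "Gamma b > 0" using apos by auto
  have h: "real n + 1 > 0" "real n + 2 > 0" "3*real n+4 > 0" "3*real n+2 > 0" by auto
  have gen: "\<And>nn a b Ga Gb F2n Fn :: real. a = nn/2+1 \<Longrightarrow> b = 3*nn/2+1 \<Longrightarrow> Ga > 0 \<Longrightarrow> Gb > 0 \<Longrightarrow> Fn > 0 \<Longrightarrow> nn \<ge> 1 \<Longrightarrow>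
     (2*nn+4)*(2*nn+3)*(2*nn+2)*(2*nn+1)*F2n/(2*((nn+2)*(nn+1)*Fn)) * (3*(a*Ga)/((b+2)*(b+1)*b*Gb))
     = F2n/(2*Fn)*(3*Ga/Gb) * (16*(2*nn+3)*(2*nn+1)/(3*(3*nn+4)*(3*nn+2)))"
    by (simp add: divide_simps) algebra
  have "RR (n+2) = (2*real n+4)*(2*real n+3)*(2*real n+2)*(2*real n+1)*fact (2*n)/(2*((real n+2)*(real n+1)*fact n)) * (3*(a*Gamma a)/((b+2)*(b+1)*b*Gamma b))"
    unfolding RR_def ga gb f1 f2 ..
  also have "\<dots> = fact (2*n)/(2*fact n)*(3*Gamma a/Gamma b) * (16*(2*real n+3)*(2*real n+1)/(3*(3*real n+4)*(3*real n+2)))"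
    by (rule gen) (use G0 assms in \<open>auto simp: a_def b_def\<close>)
  also have "\<dots> = RR n * (16*(2*real n+3)*(2*real n+1)/(3*(3*real n+4)*(3*real n+2)))"
    unfolding RR_def a_def b_def ..
  finally show ?thesis .
qed

lemma RR_small: "RR 1 = 2" "RR 2 = 3"
proof -
  have g: "Gamma (5/2::real) = (3/2) * Gamma (3/2)" using Gp[of "3/2"] by simp
  have p: "Gamma (3/2::real) > 0" by (rule Gamma_real_pos) simp
  then have p': "Gamma (3/2::real) \<noteq> 0" by linarith
  show "RR 1 = 2" unfolding RR_def using p' by (simp add: g)
  have "Gamma (4::real) = 6" by (simp add: Gamma_numeral numeral_eq_Suc fact_Suc)
  moreover have "Gamma (2::real) = 1" by (simp add: Gamma_numeral)
  ultimately show "RR 2 = 3" unfolding RR_def by (simp add: numeral_eq_Suc fact_Suc)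
qed

lemma F_rec: "F_per (Suc N + 2) 2 = F_per (Suc N) 2 * (16*(2*real (Suc N)+3)*(2*real (Suc N)+1)/(3*(3*real (Suc N)+4)*(3*real (Suc N)+2)))"
proof -
  have e: "Suc N + 2 = Suc (N+2)" by simp
  have d: "(real N+1)*(real N+2) \<noteq> 0" by simp
  have r: "aa (N+2) = (12*(3*real N+2)*(3*real N+4)*aa N)/((real N+1)*(real N+2))"
    by (metis aa_rec nonzero_mult_div_cancel_left d)
  have c1: "(fact (2*(N+2)+1)::real) = (2*real N+5)*(2*real N+4)*(2*real N+3)*(2*real N+2)*fact (2*N+1)"
  proof -
    have "2*(N+2)+1 = Suc (Suc (Suc (Suc (2*N+1))))" by simp
    then show ?thesis by (simp add: fact_Suc algebra_simps)
  qed
  have c2: "(fact (3*(N+2)+1)::real) = (3*real N+7)*(3*real N+6)*(3*real N+5)*(3*real N+4)*(3*real N+3)*(3*real N+2)*fact (3*N+1)"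
  proof -
    have e: "3*(N+2)+1 = Suc (Suc (Suc (Suc (Suc (Suc (3*N+1))))))" by simp
    show ?thesis by (simp only: e) (simp add: fact_Suc algebra_simps)
  qed
  have c3: "(fact (N+2)::real) = (real N+2)*(real N+1)*fact N" using fact2[of N] by simp
  have cc: "CC (N+2) = (2*real N+5)*(2*real N+4)*(2*real N+3)*(2*real N+2)*((real N+2)*(real N+1))
      / ((3*real N+7)*(3*real N+6)*(3*real N+5)*(3*real N+4)*(3*real N+3)*(3*real N+2)) * CC N"
    unfolding CC_def c1 c2 c3 by (simp add: field_simps)
  have gen: "\<And>n c a :: real. n \<ge> 0 \<Longrightarrow>
     (2*n+5)*(2*n+4)*(2*n+3)*(2*n+2)*((n+2)*(n+1)) / ((3*n+7)*(3*n+6)*(3*n+5)*(3*n+4)*(3*n+3)*(3*n+2)) * c * 2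
       * ((12*(3*n+2)*(3*n+4)*a)/((n+1)*(n+2)))
     = c * 2 * a * (16*(2*(n+1)+3)*(2*(n+1)+1)/(3*(3*(n+1)+4)*(3*(n+1)+2)))"
    by (simp add: divide_simps) algebra
  show ?thesis unfolding e F_PP aa_PP[symmetric] r cc
    using gen[of "real N" "CC N" "aa N"] by simp
qed

lemma F_closed: "F_per (Suc N) 2 = RR (Suc N)"
proof (induction N rule: less_induct)
  case (less N)
  show ?case
  proof (cases "N \<ge> 2")
    case True
    then obtain k where k: "N = k + 2" by (metis le_add_diff_inverse2)
    have rr: "RR (Suc k + 2) = RR (Suc k) * (16*(2*real (Suc k)+3)*(2*real (Suc k)+1)/(3*(3*real (Suc k)+4)*(3*real (Suc k)+2)))"
      by (rule RR_rec) simp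
    have "F_per (Suc k + 2) 2 = RR (Suc k + 2)"
      unfolding F_rec rr using less[of k] k by simp
    then show ?thesis using k by simp
  next
    case False
    then have "N = 0 \<or> N = 1" by auto
    then show ?thesis
    proof
      assume "N = 0" then show ?thesis using RR_small F_PP[of 0 2] aa_small aa_PP[of 0]
        unfolding CC_def by simp
    next
      assume "N = 1" then show ?thesis using RR_small F_PP[of 1 2] aa_small aa_PP[of 1]
        unfolding CC_def by (simp add: numeral_eq_Suc fact_Suc)
    qed
  qed
qed




definition Dn :: "nat \<Rightarrow> real" where "Dn n = (\<Prod>j<n. fact (n+j))"
definition Nm :: "nat \<Rightarrow> real" where "Nm n = (\<Prod>j<n. fact (3*j+1))"

lemma A_Nm: "A_num n = Nm n / Dn n"
  unfolding A_num_def Nm_def Dn_def by (rule prod_dividef)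

lemma Dn_pos: "Dn n > 0" unfolding Dn_def by (rule prod_pos) auto
lemma Nm_pos: "Nm n > 0" unfolding Nm_def by (rule prod_pos) auto

lemma Dn_Suc: "Dn (Suc n) * fact n = Dn n * fact (2*n) * fact (2*n+1)"
proof -
  have "(\<Prod>i<Suc (Suc n). (fact (n+i)::real)) = fact (n+0) * (\<Prod>i<Suc n. fact (n + Suc i))"
    by (rule prod.lessThan_Suc_shift)
  also have "(\<Prod>i<Suc n. (fact (n + Suc i)::real)) = Dn (Suc n)" unfolding Dn_def by simp
  finally have 1: "(\<Prod>i<Suc (Suc n). (fact (n+i)::real)) = fact n * Dn (Suc n)" by simp
  have 2: "(\<Prod>i<Suc (Suc n). (fact (n+i)::real)) = Dn n * fact (2*n) * fact (2*n+1)"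
  proof -
    have e: "n+n = 2*n" "n + Suc n = 2*n+1" by simp_all
    have "(\<Prod>i<Suc (Suc n). (fact (n+i)::real)) = (\<Prod>i<n. fact (n+i)) * fact (n+n) * fact (n + Suc n)"
      by (simp only: prod.lessThan_Suc)
    then show ?thesis unfolding Dn_def e .
  qed
  from 1 2 show ?thesis by (metis mult.commute)
qed

lemma A_Suc: "A_num (Suc n) = A_num n * (fact (3*n+1) * fact n / (fact (2*n) * fact (2*n+1)))"
proof -
  have N: "Nm (Suc n) = Nm n * fact (3*n+1)" unfolding Nm_def by simp
  have D: "Dn (Suc n) = Dn n * fact (2*n) * fact (2*n+1) / fact n"
    using Dn_Suc[of n] by (simp add: field_simps)
  show ?thesis unfolding A_Nm N D using Dn_pos[of n] by (simp add: field_simps)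
qed

lemma AV_Suc: "AV_odd (Suc m) = AV_odd m * (real (3*m+2) * (fact (6*m+3) * fact (2*m+1)) / (fact (4*m+3) * fact (4*m+2)))"
  unfolding AV_odd_def by simp

lemma A_pos: "A_num n > 0" unfolding A_Nm using Nm_pos Dn_pos by simp

definition Godd :: "nat \<Rightarrow> real" where
  "Godd m = 2 ^ (2*(2*m+1) - 1) * (AV_odd m)^2 / A_num (2*m+1)"

lemma Godd_Suc: "Godd (Suc m) = Godd m * (16*(2*real (Suc (2*m))+3)*(2*real (Suc (2*m))+1)/(3*(3*real (Suc (2*m))+4)*(3*real (Suc (2*m))+2)))"
proof -
  define n where "n = 2*m+1"
  define F6 where "F6 = (fact (6*m+3)::real)"
  define F2 where "F2 = (fact (2*m+1)::real)"
  define F4 where "F4 = (fact (4*m+2)::real)"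
  define x where "x = real m"
  have pos: "F6 > 0" "F2 > 0" "F4 > 0" unfolding F6_def F2_def F4_def by auto
  have A2: "A_num (2*Suc m+1) = A_num n * (fact (3*n+1) * fact n / (fact (2*n) * fact (2*n+1)))
      * (fact (3*(n+1)+1) * fact (n+1) / (fact (2*(n+1)) * fact (2*(n+1)+1)))"
  proof -
    have "2*Suc m+1 = Suc (Suc n)" unfolding n_def by simp
    then show ?thesis using A_Suc[of n] A_Suc[of "Suc n"] by simp
  qed
  have e1: "(fact (3*n+1)::real) = (6*x+4)*F6"
  proof -
    have eq: "3*n+1 = Suc (6*m+3)" unfolding n_def by simp
    show ?thesis unfolding eq fact1 F6_def x_def by (simp add: algebra_simps)
  qed
  have e2: "(fact n::real) = F2" unfolding n_def F2_def ..
  have e3: "(fact (2*n)::real) = F4" unfolding n_def F4_def by (simp add: algebra_simps)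
  have e4: "(fact (2*n+1)::real) = (4*x+3)*F4"
  proof -
    have eq: "2*n+1 = Suc (4*m+2)" unfolding n_def by simp
    show ?thesis unfolding eq fact1 F4_def x_def by (simp add: algebra_simps)
  qed
  have e5: "(fact (3*(n+1)+1)::real) = (6*x+7)*(6*x+6)*(6*x+5)*(6*x+4)*F6"
  proof -
    have eq: "3*(n+1)+1 = Suc (Suc (Suc (Suc (6*m+3))))" unfolding n_def by simp
    show ?thesis unfolding eq fact1 F6_def x_def by (simp add: algebra_simps)
  qed
  have e6: "(fact (n+1)::real) = (2*x+2)*F2"
  proof -
    have eq: "n+1 = Suc (2*m+1)" unfolding n_def by simp
    show ?thesis unfolding eq fact1 F2_def x_def by (simp add: algebra_simps)
  qed
  have e7: "(fact (2*(n+1))::real) = (4*x+4)*(4*x+3)*F4"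
  proof -
    have eq: "2*(n+1) = Suc (Suc (4*m+2))" unfolding n_def by simp
    show ?thesis unfolding eq fact1 F4_def x_def by (simp add: algebra_simps)
  qed
  have e8: "(fact (2*(n+1)+1)::real) = (4*x+5)*(4*x+4)*(4*x+3)*F4"
  proof -
    have eq: "2*(n+1)+1 = Suc (Suc (Suc (4*m+2)))" unfolding n_def by simp
    show ?thesis unfolding eq fact1 F4_def x_def by (simp add: algebra_simps)
  qed
  have r: "AV_odd (Suc m) = AV_odd m * ((3*x+2) * (F6 * F2) / ((4*x+3)*F4 * F4))"
  proof -
    have e43: "(fact (4*m+3)::real) = (4*x+3)*F4"
    proof -
      have eqq: "4*m+3 = Suc (4*m+2)" by simp
      have A: "fact (4*m+3) = (real (4*m+2)+1) * (fact (4*m+2)::real)" unfolding eqq by (rule fact1)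
      have B: "real (4*m+2)+1 = 4*x+3" unfolding x_def by simp
      show ?thesis unfolding F4_def by (simp only: A B)
    qed
    show ?thesis unfolding AV_Suc e43 F6_def[symmetric] F2_def[symmetric] F4_def[symmetric] by (simp add: x_def)
  qed
  have p2: "(2::real) ^ (2*(2*Suc m+1) - 1) = 16 * 2 ^ (2*(2*m+1) - 1)"
  proof -
    have "2*(2*Suc m+1) - 1 = (2*(2*m+1) - 1) + 4" by simp
    then show ?thesis by (simp add: power_add)
  qed
  define U where "U = F6*F2/(F4*F4)"
  have x0: "x \<ge> 0" unfolding x_def by simp
  define a where "a = 2*x+2"
  define b where "b = 3*x+2"
  define c where "c = 4*x+3"
  define d where "d = 4*x+5"
  define e where "e = 6*x+7"
  define f where "f = 6*x+5"
  have nz: "a \<noteq> 0" "b \<noteq> 0" "c \<noteq> 0" "d \<noteq> 0" "e \<noteq> 0" "f \<noteq> 0"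
    unfolding a_def b_def c_def d_def e_def f_def using x0 by auto
  have q: "6*x+4 = 2*b" "6*x+6 = 3*a" "4*x+4 = 2*a" unfolding a_def b_def by auto
  define R0 where "R0 = b/c"
  define S1 where "S1 = 2*b/c"
  define S2 where "S2 = 3*e*f*b/(2*c^2*d)"
  have U0: "U \<noteq> 0" unfolding U_def using pos by simp
  have S0: "S1 \<noteq> 0" "S2 \<noteq> 0" unfolding S1_def S2_def using nz by auto
  have u1: "(3*x+2) * (F6 * F2) / ((4*x+3)*F4 * F4) = R0*U"
    unfolding R0_def U_def b_def[symmetric] c_def[symmetric] using nz pos by (simp add: field_simps)
  have u2: "(6*x+4)*F6 * F2 / (F4 * ((4*x+3)*F4)) = S1*U"
    unfolding S1_def U_def q c_def[symmetric] using nz pos by (simp add: field_simps)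
  have u3: "(6*x+7)*(6*x+6)*(6*x+5)*(6*x+4)*F6 * ((2*x+2)*F2) / ((4*x+4)*(4*x+3)*F4 * ((4*x+5)*(4*x+4)*(4*x+3)*F4)) = S2*U"
    unfolding S2_def U_def q a_def[symmetric] c_def[symmetric] d_def[symmetric] e_def[symmetric] f_def[symmetric]
    using nz pos by (simp add: field_simps power2_eq_square)
  have gen: "\<And>P V A :: real. A \<noteq> 0 \<Longrightarrow> 16 * P * (V * (R0*U))^2 / (A * (S1*U) * (S2*U)) = P * V^2 / A * (16*R0^2/(S1*S2))"
    using U0 S0 by (simp add: field_simps power2_eq_square)
  have rho0: "16*R0^2/(S1*S2) = 16*c*d/(3*e*f)"
    unfolding R0_def S1_def S2_def using nz by (simp add: field_simps power2_eq_square)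
  have rho: "16*R0^2/(S1*S2) = 16*(2*(2*x+1)+3)*(2*(2*x+1)+1)/(3*(3*(2*x+1)+4)*(3*(2*x+1)+2))"
    unfolding rho0 c_def d_def e_def f_def by (simp add: algebra_simps)
  have "Godd (Suc m) = 16 * 2 ^ (2*(2*m+1) - 1) * (AV_odd m * (R0*U))^2 / (A_num n * (S1*U) * (S2*U))"
    unfolding Godd_def A2 p2 r e1 e2 e3 e4 e5 e6 e7 e8 u1 u2 u3 ..
  also have "\<dots> = 2 ^ (2*(2*m+1) - 1) * (AV_odd m)^2 / A_num n * (16*(2*(2*x+1)+3)*(2*(2*x+1)+1)/(3*(3*(2*x+1)+4)*(3*(2*x+1)+2)))"
    unfolding gen[OF A_pos[THEN less_imp_neq, symmetric]] rho ..
  also have "\<dots> = Godd m * (16*(2*real (Suc (2*m))+3)*(2*real (Suc (2*m))+1)/(3*(3*real (Suc (2*m))+4)*(3*real (Suc (2*m))+2)))"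
    unfolding Godd_def n_def x_def by simp
  finally show ?thesis .
qed

lemma F_odd: "F_per (2*m+1) 2 = Godd m"
proof (induction m)
  case 0
  have "A_num 1 = 1" unfolding A_num_def by simp
  moreover have "AV_odd 0 = 1" unfolding AV_odd_def by simp
  ultimately show ?case unfolding Godd_def using F_closed[of 0] RR_small by simp
next
  case (Suc m)
  have e: "2 * Suc m + 1 = Suc (2*m) + 2" by simp
  show ?case unfolding e F_rec Godd_Suc using Suc by simp
qed


theorem mainTheorem5:
  fixes n :: nat
  assumes "n \<ge> 1"
  shows "F_per n 2 = fact (2*n) / (2 * fact n) *
            (3 * Gamma (real n / 2 + 1) / Gamma (3 * real n / 2 + 1))
       \<and> F_per n (1/2) = (1/2) ^ (n + 1) * (fact (2*n) / (2 * fact n) *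
            (3 * Gamma (real n / 2 + 1) / Gamma (3 * real n / 2 + 1)))
       \<and> (\<forall>m. n = 2*m + 1 \<longrightarrow>
            F_per n 2 = 2 ^ (2*n - 1) * (AV_odd m)^2 / A_num n
          \<and> F_per n (1/2) = 2 powr (real n - 2) * (AV_odd m)^2 / A_num n)"
proof -
  obtain N where n: "n = Suc N" using assms by (cases n) auto
  have P1: "F_per n 2 = fact (2*n) / (2 * fact n) *
            (3 * Gamma (real n / 2 + 1) / Gamma (3 * real n / 2 + 1))"
    using F_closed[of N] unfolding n RR_def .
  have H: "F_per n (1/2) = (1/2)^(n+1) * F_per n 2" using F_half[of N] unfolding n .
  have P2: "F_per n (1/2) = (1/2) ^ (n + 1) * (fact (2*n) / (2 * fact n) *
            (3 * Gamma (real n / 2 + 1) / Gamma (3 * real n / 2 + 1)))"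
    unfolding H P1 ..
  have pw: "(1/2::real)^(n+1) * 2^(2*n-1) = 2 powr (real n - 2)"
  proof -
    define t where "t = (2::real)^N"
    have t0: "t > 0" unfolding t_def by simp
    have a: "(2::real) powr (real n - 2) = 2^n / 4"
      by (simp add: powr_diff powr_realpow)
    have a2: "(2::real)^n = 2*t" unfolding n t_def by (simp only: power_Suc)
    have eb: "2*n-1 = N+N+1" using n by simp
    have b: "(2::real)^(2*n-1) = t * t * 2" unfolding eb t_def by (simp only: power_add power_one_right)
    have ec: "n+1 = N+2" using n by simp
    have c: "(1/2::real)^(n+1) = 1/(t*4)" unfolding ec t_def power_one_over by (simp add: power_add)
    have g: "1/(t*4) * (t*t*2) = 2*t/4" using t0 by (simp add: field_simps)
    show ?thesis unfolding a a2 b c g ..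
  qed
  have P3: "\<forall>m. n = 2*m + 1 \<longrightarrow>
            F_per n 2 = 2 ^ (2*n - 1) * (AV_odd m)^2 / A_num n
          \<and> F_per n (1/2) = 2 powr (real n - 2) * (AV_odd m)^2 / A_num n"
  proof (intro allI impI)
    fix m assume nm: "n = 2*m + 1"
    have o: "F_per n 2 = 2 ^ (2*n - 1) * (AV_odd m)^2 / A_num n"
      using F_odd[of m] unfolding Godd_def nm .
    have "F_per n (1/2) = ((1/2::real)^(n+1) * 2^(2*n-1)) * (AV_odd m)^2 / A_num n"
      unfolding H o by simp
    then show "F_per n 2 = 2 ^ (2*n - 1) * (AV_odd m)^2 / A_num n
          \<and> F_per n (1/2) = 2 powr (real n - 2) * (AV_odd m)^2 / A_num n"
      using o unfolding pw by simp
  qed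
  show ?thesis using P1 P2 P3 by blast
qed

end
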